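(* Let $\Sigma$ be a finite alphabet, let $\mathbf{w}$ be a right-infinite word over $\Sigma$, and let $L_{\mathbf w}$ be its Lie complexity function and $p_{\mathbf w}$ its factor complexity function. Then for each $n\ge 1$, $$L_{\mathbf w}(n)\le p_{\mathbf w}(n)-p_{\mathbf w}(n-1)+1.$$ In particular, if $\mathbf w$ has linear factor complexity, then $L_{\mathbf w}(n)$ is bounded above by a constant independent of $n$.
   Context: A factor of $\mathbf w$ is a finite block of contiguous symbols of $\mathbf w$ (the empty word included); $\mathrm{Fac}(\mathbf w)$ is the set of factors. The factor complexity $p_{\mathbf w}(n)$ is the number of distinct factors of $\mathbf w$ of length $n$ (so $p_{\mathbf w}(0)=1$). Two words are cyclically equivalent ($v\sim_C v'$) if each is a cyclic shift (conjugate) of the other; $[v]_C$ denotes the class of $v$. The Lie complexity is $L_{\mathbf w}(n)=\#\{[v]_C : |v|=n,\ [v]_C\subseteq \mathrm{Fac}(\mathbf w)\}$, i.e. the number of cyclic classes of length-$n$ words all of whose members are factors of $\mathbf w$. $\mathbf w$ has linear factor complexity if there are constants $A,B$ with $p_{\mathbf w}(n)\le An+B$ for all $n$. *)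

theory Defs
  imports Complex_Main
begin

definition factors :: "(nat \<Rightarrow> 'a) \<Rightarrow> 'a list set" where
  "factors w = {v. \<exists>i. v = map w [i..<i + length v]}"

definition factor_complexity :: "(nat \<Rightarrow> 'a) \<Rightarrow> nat \<Rightarrow> nat" where
  "factor_complexity w n = card {v \<in> factors w. length v = n}"

definition cyc_class :: "'a list \<Rightarrow> 'a list set" where
  "cyc_class v = {rotate k v | k. True}"

definition lie_complexity :: "(nat \<Rightarrow> 'a) \<Rightarrow> nat \<Rightarrow> nat" where
  "lie_complexity w n =
     card {C. \<exists>v. length v = n \<and> C = cyc_class v \<and> C \<subseteq> factors w}"

definition linear_factor_complexity :: "(nat \<Rightarrow> 'a) \<Rightarrow> bool" where
  "linear_factor_complexity w \<longleftrightarrow>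
     (\<exists>A B::real. \<forall>n. real (factor_complexity w n) \<le> A * real n + B)"

end

theory Submission
  imports Defs
begin

definition fo :: "(nat \<Rightarrow> 'a) \<Rightarrow> 'a list \<Rightarrow> nat" where
  "fo w u = (LEAST i. u = map w [i..<i+length u])"
definition Fc :: "(nat \<Rightarrow> 'a) \<Rightarrow> nat \<Rightarrow> 'a list set" where
  "Fc w n = {v \<in> factors w. length v = n}"
definition Tr :: "(nat \<Rightarrow> 'a) \<Rightarrow> nat \<Rightarrow> 'a list set" where
  "Tr w m = (\<lambda>u. map w [fo w u - 1..<fo w u - 1 + m]) ` {u \<in> Fc w (m-1). 0 < fo w u}"

lemma fo_spec: "u \<in> factors w \<Longrightarrow> map w [fo w u..<fo w u + length u] = u"
proof -
  assume "u \<in> factors w"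
  then have "\<exists>i. u = map w [i..<i+length u]" unfolding factors_def by blast
  then have "u = map w [fo w u..<fo w u+length u]" unfolding fo_def by (rule LeastI_ex)
  then show ?thesis by (rule sym)
qed

lemma fo_le: "map w [i..<i+length v] = v \<Longrightarrow> fo w v \<le> i"
  unfolding fo_def by (rule Least_le) (rule sym)

lemma facI: "map w [i..<i+length v] = v \<Longrightarrow> v \<in> factors w"
  unfolding factors_def by (auto intro: sym)

lemma facE: assumes "v \<in> factors w" "\<And>i. map w [i..<i+length v] = v \<Longrightarrow> P" shows P
proof -
  obtain i where "v = map w [i..<i+length v]" using assms(1) unfolding factors_def by blast
  then show P using assms(2)[of i] by (simp only: eq_commute)
qed

lemma finite_Fc: assumes "finite S" "\<forall>i. w i \<in> S" shows "finite (Fc w n)"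
proof -
  have "Fc w n \<subseteq> {xs. set xs \<subseteq> S \<and> length xs = n}"
  proof
    fix v assume vF: "v \<in> Fc w n"
    then have vf: "v \<in> factors w" and vl: "length v = n" by (auto simp: Fc_def)
    obtain i where v: "map w [i..<i+length v] = v" using facE[OF vf] by blast
    have "set (map w [i..<i+length v]) \<subseteq> S" using assms(2) by auto
    then have "set v \<subseteq> S" using v by simp
    then show "v \<in> {xs. set xs \<subseteq> S \<and> length xs = n}" using vl by simp
  qed
  then show ?thesis using finite_lists_length_eq[OF assms(1)] finite_subset by blast
qed

lemma take_fac: "v \<in> factors w \<Longrightarrow> take m v \<in> factors w"
proof -
  assume "v \<in> factors w"
  then obtain i where v: "map w [i..<i+length v] = v" by (rule facE)
  have "map w [i..<i + length (take m v)] = take m (map w [i..<i+length v])"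
    by (simp add: take_map min_def)
  then have "map w [i..<i + length (take m v)] = take m v" using v by simp
  then show ?thesis by (rule facI)
qed

lemma Tr_sub: "m \<ge> 1 \<Longrightarrow> Tr w m \<subseteq> Fc w m"
proof
  fix x assume "x \<in> Tr w m"
  then obtain u where "x = map w [fo w u - 1..<fo w u - 1 + m]" unfolding Tr_def by blast
  then obtain a where x: "x = map w [a..<a+m]" by blast
  then have "map w [a..<a+length x] = x" by simp
  then have "x \<in> factors w" by (rule facI)
  then show "x \<in> Fc w m" using x by (simp add: Fc_def)
qed

lemma Tr_prop: assumes "m \<ge> 1" "x \<in> Tr w m"
  shows "fo w (take (m-1) x) < fo w (drop 1 x)"
proof -
  obtain u where u: "u \<in> Fc w (m-1)" "0 < fo w u" and x: "x = map w [fo w u - 1..<fo w u - 1 + m]"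
    using assms(2) unfolding Tr_def by blast
  define j where "j = fo w u"
  have ul: "length u = m - 1" using u(1) by (simp add: Fc_def)
  have uu: "map w [j..<j + (m-1)] = u" using fo_spec[of u w] u(1) ul unfolding j_def by (simp add: Fc_def)
  have "drop 1 x = map w [j..<j + (m-1)]" using x u(2) assms(1) unfolding j_def
    by (simp add: drop_map)
  then have d: "drop 1 x = u" using uu by simp
  have "map w [j-1..<j-1 + length (take (m-1) x)] = take (m-1) x" using x u(2) assms(1) unfolding j_def
    by (simp add: take_map)
  then have "fo w (take (m-1) x) \<le> j - 1" by (rule fo_le)
  then show ?thesis using d u(2) unfolding j_def by simp
qed

lemma card_Tr: assumes "m \<ge> 1" "finite (Fc w (m-1))"
  shows "card (Fc w (m-1)) \<le> card (Tr w m) + 1"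
proof -
  define E where "E = {u \<in> Fc w (m-1). 0 < fo w u}"
  have dr: "drop 1 (map w [fo w u - 1..<fo w u - 1 + m]) = u" if "u \<in> E" for u
  proof -
    have "u \<in> factors w" "length u = m - 1" "0 < fo w u" using that by (auto simp: E_def Fc_def)
    moreover from this have "map w [fo w u..<fo w u + (m-1)] = u" using fo_spec[of u w] by simp
    ultimately show ?thesis using assms(1) by (simp add: drop_map)
  qed
  have inj: "inj_on (\<lambda>u. map w [fo w u - 1..<fo w u - 1 + m]) E"
  proof (rule inj_onI)
    fix u v assume uE: "u \<in> E" and vE: "v \<in> E" and eq: "map w [fo w u - 1..<fo w u - 1 + m] = map w [fo w v - 1..<fo w v - 1 + m]"
    show "u = v" using dr[OF uE] dr[OF vE] eq by metis
  qed
  have cT: "card (Tr w m) = card E" unfolding Tr_def E_def[symmetric] using card_image[OF inj] .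
  have "Fc w (m-1) \<subseteq> insert (map w [0..<m-1]) E"
  proof
    fix u assume u: "u \<in> Fc w (m-1)"
    show "u \<in> insert (map w [0..<m-1]) E"
    proof (cases "fo w u = 0")
      case True
      have "map w [fo w u..<fo w u + length u] = u" using fo_spec[of u w] u by (simp add: Fc_def)
      then have "map w [0..<m-1] = u" using True u by (simp add: Fc_def)
      then show ?thesis by simp
    next
      case False then show ?thesis using u by (auto simp: E_def)
    qed
  qed
  moreover have "finite E" using assms(2) by (auto simp: E_def)
  ultimately have "card (Fc w (m-1)) \<le> card (insert (map w [0..<m-1]) E)" by (intro card_mono) auto
  also have "\<dots> \<le> card E + 1" using \<open>finite E\<close> by (simp add: card_insert_if)
  finally show ?thesis using cT by simp
qed

definition succ_closed :: "nat \<Rightarrow> 'a list set \<Rightarrow> bool" where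
  "succ_closed m X \<longleftrightarrow> (\<forall>x\<in>X. \<exists>y\<in>X. take (m-1) y = drop 1 x)"

lemma tree: assumes "m \<ge> 1" "finite X" "X \<noteq> {}" "succ_closed m X"
  shows "\<exists>x\<in>X. x \<notin> Tr w m"
proof (rule ccontr)
  assume "\<not> ?thesis"
  then have sub: "X \<subseteq> Tr w m" by blast
  define g where "g x = fo w (take (m-1) x)" for x
  have fin: "finite (g ` X)" using assms(2) by simp
  have "Max (g ` X) \<in> g ` X" using Max_in[OF fin] assms(3) by auto
  then obtain x where x: "x \<in> X" "g x = Max (g ` X)" by (metis imageE)
  obtain y where y: "y \<in> X" "take (m-1) y = drop 1 x" using assms(4) x(1) unfolding succ_closed_def by blast
  have "g x < g y" using Tr_prop[OF assms(1), of x w] sub x(1) y(2) unfolding g_def by auto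
  moreover have "g y \<le> Max (g ` X)" using fin y(1) by simp
  ultimately show False using x(2) by simp
qed

lemma count: assumes "m \<ge> 1" "finite (Fc w m)"
  and X: "\<And>i. i \<in> I \<Longrightarrow> X i \<subseteq> Fc w m \<and> X i \<noteq> {} \<and> succ_closed m (X i)"
  and disj: "\<And>i j. i \<in> I \<Longrightarrow> j \<in> I \<Longrightarrow> X i \<inter> X j \<noteq> {} \<Longrightarrow> i = j"
  shows "card I \<le> card (Fc w m - Tr w m)"
proof -
  have "\<forall>i\<in>I. \<exists>x. x \<in> X i \<and> x \<notin> Tr w m"
  proof
    fix i assume i: "i \<in> I"
    have "finite (X i)" using X[OF i] assms(2) finite_subset by blast
    then show "\<exists>x. x \<in> X i \<and> x \<notin> Tr w m" using tree[OF assms(1), of "X i" w] X[OF i] by blast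
  qed
  from bchoice[OF this] obtain h where h0: "\<forall>i\<in>I. h i \<in> X i \<and> h i \<notin> Tr w m" by blast
  then have h: "\<And>i. i \<in> I \<Longrightarrow> h i \<in> X i \<and> h i \<notin> Tr w m" by blast
  have "inj_on h I"
  proof (rule inj_onI)
    fix i j assume ij: "i \<in> I" "j \<in> I" "h i = h j"
    have "h i \<in> X i" "h j \<in> X j" using h[OF ij(1)] h[OF ij(2)] by auto
    then have "X i \<inter> X j \<noteq> {}" using ij(3) by auto
    then show "i = j" using disj ij(1,2) by blast
  qed
  moreover have "h ` I \<subseteq> Fc w m - Tr w m"
  proof
    fix z assume "z \<in> h ` I"
    then obtain i where i: "i \<in> I" "z = h i" by blast
    show "z \<in> Fc w m - Tr w m" using h[OF i(1)] X[OF i(1)] i(2) by blast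
  qed
  ultimately show ?thesis using card_inj_on_le assms(2) by blast
qed

lemma count_int: assumes "m \<ge> 1" "finite (Fc w m)" "finite (Fc w (m-1))"
  shows "int (card (Fc w m - Tr w m)) \<le> int (card (Fc w m)) - int (card (Fc w (m-1))) + 1"
proof -
  have "card (Fc w m - Tr w m) = card (Fc w m) - card (Tr w m)"
    using card_Diff_subset[OF finite_subset[OF Tr_sub[OF assms(1)] assms(2)] Tr_sub[OF assms(1)]] .
  moreover have "card (Tr w m) \<le> card (Fc w m)" using card_mono[OF assms(2) Tr_sub[OF assms(1)]] .
  moreover have "card (Fc w (m-1)) \<le> card (Tr w m) + 1" using card_Tr[OF assms(1) assms(3)] .
  ultimately show ?thesis by linarith
qed

lemma cyc_self: "v \<in> cyc_class v"
  unfolding cyc_class_def by (auto intro: exI[of _ 0])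

lemma cyc_len: "x \<in> cyc_class v \<Longrightarrow> length x = length v"
  unfolding cyc_class_def by auto

lemma cyc_rot1: "x \<in> cyc_class v \<Longrightarrow> rotate1 x \<in> cyc_class v"
  unfolding cyc_class_def by (auto intro: exI[of _ "Suc _"])

lemma aux_arith: "r < (L::nat) \<Longrightarrow> j + L - r + (L*q + r) = j + L * Suc q" by simp
lemma modaux: assumes "L \<noteq> 0" shows "(j + L - k mod L + k) mod L = j mod (L::nat)"
proof -
  have "j + L - k mod L + k = j + L * Suc (k div L)"
    using aux_arith[of "k mod L" L j "k div L"] assms mult_div_mod_eq[of L k] by simp
  then show ?thesis by (metis mod_mult_self1 mult.commute)
qed

lemma cyc_same: assumes "y \<in> cyc_class v" shows "cyc_class y = cyc_class v"
proof -
  obtain k where y: "y = rotate k v" using assms unfolding cyc_class_def by auto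
  show ?thesis
  proof (cases "v = []")
    case True then show ?thesis using y by simp
  next
  case vne: False
  show ?thesis
  proof
    show "cyc_class y \<subseteq> cyc_class v" unfolding cyc_class_def y by (auto simp: rotate_rotate)
  next
    show "cyc_class v \<subseteq> cyc_class y"
    proof
      fix z assume "z \<in> cyc_class v"
      then obtain j where z: "z = rotate j v" unfolding cyc_class_def by auto
      define L where "L = length v"
      have "rotate (j + L - k mod L) y = rotate (j + L - k mod L + k) v" by (simp add: y rotate_rotate)
      also have "\<dots> = rotate ((j + L - k mod L + k) mod L) v" unfolding L_def by (rule rotate_conv_mod)
      also have "(j + L - k mod L + k) mod L = j mod L"
        using modaux[of L j k] vne L_def by simp
      also have "rotate (j mod L) v = z" unfolding z L_def by (rule rotate_conv_mod[symmetric])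
      finally show "z \<in> cyc_class y" unfolding cyc_class_def by blast
    qed
  qed
  qed
qed

lemma step_take: assumes "length x = n" "1 \<le> m" "m \<le> n"
  shows "take (m-1) (take m (rotate1 x)) = drop 1 (take m x)"
proof -
  have ne: "x \<noteq> []" using assms by auto
  have tl: "length (tl x) = n - 1" using assms by simp
  have "take (m-1) (take m (rotate1 x)) = take (m-1) (rotate1 x)" by (simp only: take_take min_absorb1 diff_le_self)
  also have "\<dots> = take (m-1) (tl x @ [hd x])" by (simp only: rotate1_hd_tl[OF ne])
  also have "\<dots> = take (m-1) (tl x)" using tl assms by simp
  also have "\<dots> = take (m-1) (drop 1 x)" by (cases x) auto
  also have "\<dots> = drop 1 (take m x)" by (simp only: drop_take)
  finally show ?thesis .
qed

definition good :: "(nat \<Rightarrow> 'a) \<Rightarrow> nat \<Rightarrow> 'a list set set" where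
  "good w n = {C. \<exists>v. length v = n \<and> C = cyc_class v \<and> C \<subseteq> factors w}"

lemma lie_good: "lie_complexity w n = card (good w n)"
  unfolding lie_complexity_def good_def by simp

lemma fc_Fc: "factor_complexity w n = card (Fc w n)"
  unfolding factor_complexity_def Fc_def by simp

lemma good_X: assumes "C \<in> good w n" "1 \<le> m" "m \<le> n"
  shows "take m ` C \<subseteq> Fc w m \<and> take m ` C \<noteq> {} \<and> succ_closed m (take m ` C)"
proof -
  obtain v where v: "length v = n" "C = cyc_class v" "C \<subseteq> factors w" using assms(1) unfolding good_def by blast
  have len: "length y = n" if "y \<in> C" for y using cyc_len[of y v] that v by simp
  have "take m ` C \<subseteq> Fc w m"
  proof
    fix z assume "z \<in> take m ` C"
    then obtain y where y: "y \<in> C" "z = take m y" by blast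
    have "z \<in> factors w" using take_fac[of y w m] y v(3) by blast
    moreover have "length z = m" using y len[OF y(1)] assms(3) by simp
    ultimately show "z \<in> Fc w m" by (simp add: Fc_def)
  qed
  moreover have "take m ` C \<noteq> {}" using cyc_self[of v] v(2) by blast
  moreover have "succ_closed m (take m ` C)"
    unfolding succ_closed_def
  proof
    fix z assume "z \<in> take m ` C"
    then obtain y where y: "y \<in> C" "z = take m y" by blast
    have "rotate1 y \<in> C" using cyc_rot1 y(1) v(2) by blast
    moreover have "take (m-1) (take m (rotate1 y)) = drop 1 z"
      using step_take[OF len[OF y(1)] assms(2,3)] y(2) by simp
    ultimately show "\<exists>y\<in>take m ` C. take (m - 1) y = drop 1 z" by blast
  qed
  ultimately show ?thesis by blast
qed

lemma good_elem: assumes "C \<in> good w n" "y \<in> C" shows "C = cyc_class y" "length y = n"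
proof -
  obtain v where v: "length v = n" "C = cyc_class v" "C \<subseteq> factors w" using assms(1) unfolding good_def by blast
  show "C = cyc_class y" using cyc_same[of y v] assms(2) v(2) by simp
  show "length y = n" using cyc_len[of y v] assms(2) v by simp
qed

lemma part1: assumes "1 \<le> n" "finite (Fc w n)" "finite (Fc w (n-1))"
  shows "int (lie_complexity w n) \<le> int (factor_complexity w n) - int (factor_complexity w (n-1)) + 1"
proof -
  have "card (good w n) \<le> card (Fc w n - Tr w n)"
  proof (rule count[OF assms(1,2), of "good w n" "\<lambda>C. take n ` C"])
    fix C assume "C \<in> good w n"
    then show "take n ` C \<subseteq> Fc w n \<and> take n ` C \<noteq> {} \<and> succ_closed n (take n ` C)"
      using good_X[of C w n n] assms(1) by simp
  next
    fix C D assume C: "C \<in> good w n" and D: "D \<in> good w n" and ne: "take n ` C \<inter> take n ` D \<noteq> {}"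
    then obtain y z where yz: "y \<in> C" "z \<in> D" "take n y = take n z" by blast
    have "y = z" using yz good_elem(2)[OF C yz(1)] good_elem(2)[OF D yz(2)] by simp
    then show "C = D" using good_elem(1)[OF C yz(1)] good_elem(1)[OF D yz(2)] by simp
  qed
  then show ?thesis using count_int[OF assms] lie_good[of w n] fc_Fc[of w] by simp
qed

lemma per_mod: assumes "0 < (p::nat)" "\<And>k. f (k + p) = f k" shows "f k = f (k mod p)"
proof (induction k rule: less_induct)
  case (less k)
  show ?case
  proof (cases "k < p")
    case True then show ?thesis by simp
  next
    case False
    then have k: "k = (k - p) + p" by simp
    have "f k = f (k - p)" using assms(2)[of "k - p"] k by simp
    also have "\<dots> = f ((k - p) mod p)" using less[of "k - p"] assms(1) False by simp
    also have "(k - p) mod p = k mod p" using False by (simp add: le_mod_geq)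
    finally show ?thesis .
  qed
qed

lemma per_eq: assumes len: "length x = n" "length x' = n" and rp: "rotate p x = x" "rotate p' x' = x'"
  and pos: "0 < p" "0 < p'" and pm: "p + p' \<le> m" "m \<le> n" and tk: "take m x = take m x'"
  shows "x = x'"
proof -
  have n0: "0 < n" using pos pm by simp
  define X where "X k = x ! (k mod n)" for k
  define Y where "Y k = x' ! (k mod n)" for k
  have Xn: "X k = x ! k" if "k < n" for k using that unfolding X_def by simp
  have Yn: "Y k = x' ! k" if "k < n" for k using that unfolding Y_def by simp
  have xy: "x ! k = x' ! k" if "k < m" for k
  proof -
    have "take m x ! k = take m x' ! k" using tk by simp
    then show ?thesis using that by simp
  qed
  have perX: "X (k + p) = X k" for k
  proof -
    have "rotate p x ! (k mod n) = x ! ((k mod n + p) mod n)" using nth_rotate[of "k mod n" x p] len n0 by (simp add: add.commute)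
    also have "(k mod n + p) mod n = (k + p) mod n" by (simp add: mod_add_left_eq)
    finally show ?thesis using rp(1) unfolding X_def by simp
  qed
  have perY': "Y (k + p') = Y k" for k
  proof -
    have "rotate p' x' ! (k mod n) = x' ! ((k mod n + p') mod n)" using nth_rotate[of "k mod n" x' p'] len n0 by (simp add: add.commute)
    also have "(k mod n + p') mod n = (k + p') mod n" by (simp add: mod_add_left_eq)
    finally show ?thesis using rp(2) unfolding Y_def by simp
  qed
  have loc: "Y (i + p) = Y i" if "i + p < m" for i
  proof -
    have "Y (i + p) = x' ! (i + p)" using Yn that pm by simp
    also have "\<dots> = x ! (i + p)" using xy that by simp
    also have "\<dots> = X (i + p)" using Xn that pm by simp
    also have "\<dots> = X i" by (rule perX)
    also have "\<dots> = x ! i" using Xn that pm by simp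
    also have "\<dots> = x' ! i" using xy that by simp
    also have "\<dots> = Y i" using Yn that pm by simp
    finally show ?thesis .
  qed
  have perY: "Y (j + p) = Y j" for j
  proof -
    have "Y (j + p) = Y ((j + p) mod p')" by (rule per_mod[where f=Y, OF pos(2) perY'])
    also have "(j + p) mod p' = (j mod p' + p) mod p'" by (simp add: mod_add_left_eq)
    also have "Y \<dots> = Y (j mod p' + p)" by (rule per_mod[where f=Y, OF pos(2) perY', symmetric])
    also have "\<dots> = Y (j mod p')"
    proof (rule loc)
      have "j mod p' < p'" using pos(2) by simp
      then show "j mod p' + p < m" using pm by simp
    qed
    also have "\<dots> = Y j" by (rule per_mod[where f=Y, OF pos(2) perY', symmetric])
    finally show ?thesis .
  qed
  have XY: "X k = Y k" for k
  proof (induction k rule: less_induct)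
    case (less k)
    show ?case
    proof (cases "k < m")
      case True then show ?thesis using Xn Yn xy pm by simp
    next
      case False
      then have k: "k = (k - p) + p" using pm by simp
      have "X k = X (k - p)" using perX[of "k - p"] k by simp
      also have "\<dots> = Y (k - p)" using less[of "k - p"] pos False pm by simp
      also have "\<dots> = Y k" using perY[of "k - p"] k by simp
      finally show ?thesis .
    qed
  qed
  show ?thesis
  proof (rule nth_equalityI)
    show "length x = length x'" using len by simp
    fix i assume "i < length x"
    then show "x ! i = x' ! i" using XY[of i] Xn Yn len by simp
  qed
qed

definition small :: "nat \<Rightarrow> 'a list set \<Rightarrow> bool" where
  "small n C \<longleftrightarrow> (\<exists>x\<in>C. \<exists>p. 0 < p \<and> 4 * p \<le> n \<and> rotate p x = x)"

lemma small_all: assumes "C \<in> good w n" "small n C"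
  shows "\<exists>p. 0 < p \<and> 4 * p \<le> n \<and> (\<forall>y\<in>C. rotate p y = y)"
proof -
  obtain x p where x: "x \<in> C" "0 < p" "4 * p \<le> n" "rotate p x = x" using assms(2) unfolding small_def by blast
  have "rotate p y = y" if "y \<in> C" for y
  proof -
    have "y \<in> cyc_class x" using good_elem(1)[OF assms(1) x(1)] that by simp
    then obtain k where y: "y = rotate k x" unfolding cyc_class_def by blast
    have "rotate p y = rotate (p + k) x" by (simp add: y rotate_rotate)
    also have "\<dots> = rotate k (rotate p x)" by (simp add: rotate_rotate add.commute)
    finally show ?thesis using x(4) y by simp
  qed
  then show ?thesis using x by blast
qed

lemma good_sub: "C \<in> good w n \<Longrightarrow> C \<subseteq> Fc w n"
  using good_elem(2)[of C w n] unfolding good_def Fc_def by blast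

lemma small_count: assumes "1 \<le> m" "m \<le> n" "n \<le> 2 * m" "finite (Fc w m)"
  shows "card {C \<in> good w n. small n C} \<le> card (Fc w m - Tr w m)"
proof (rule count[OF assms(1,4), of _ "\<lambda>C. take m ` C"])
  fix C assume "C \<in> {C \<in> good w n. small n C}"
  then show "take m ` C \<subseteq> Fc w m \<and> take m ` C \<noteq> {} \<and> succ_closed m (take m ` C)"
    using good_X[of C w n m] assms by simp
next
  fix C D assume C: "C \<in> {C \<in> good w n. small n C}" and D: "D \<in> {C \<in> good w n. small n C}"
    and ne: "take m ` C \<inter> take m ` D \<noteq> {}"
  then obtain y z where yz: "y \<in> C" "z \<in> D" "take m y = take m z" by blast
  obtain p where p: "0 < p" "4 * p \<le> n" "\<forall>y\<in>C. rotate p y = y" using small_all C by blast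
  obtain q where q: "0 < q" "4 * q \<le> n" "\<forall>y\<in>D. rotate q y = y" using small_all D by blast
  have "y = z"
  proof (rule per_eq)
    show "length y = n" using good_elem(2) C yz(1) by blast
    show "length z = n" using good_elem(2) D yz(2) by blast
    show "rotate p y = y" using p yz by blast
    show "rotate q z = z" using q yz by blast
    show "0 < p" "0 < q" by (fact p(1), fact q(1))
    show "p + q \<le> m" using p q assms by simp
    show "m \<le> n" by (fact assms(2))
    show "take m y = take m z" by (fact yz(3))
  qed
  then show "C = D" using good_elem(1) C D yz by blast
qed

lemma big_card: assumes "C \<in> good w n" "\<not> small n C" "1 \<le> n" "finite (Fc w n)"
  shows "n < 4 * card C"
proof -
  obtain v where v: "length v = n" "C = cyc_class v" using assms(1) unfolding good_def by blast
  have vC: "v \<in> C" using cyc_self v by simp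
  define q where "q = (LEAST p. 0 < p \<and> rotate p v = v)"
  have rn: "rotate n v = v" using v(1) by simp
  have hq: "0 < q \<and> rotate q v = v" unfolding q_def by (rule LeastI[of _ n]) (use rn assms(3) in simp)
  have qn: "q \<le> n" unfolding q_def by (rule Least_le) (use rn assms(3) in simp)
  have q4: "n < 4 * q" using assms(2) hq vC unfolding small_def by (metis not_le)
  have inj: "inj_on (\<lambda>i. rotate i v) {..<q}"
  proof (rule inj_onI)
    fix i j assume i: "i \<in> {..<q}" and j: "j \<in> {..<q}" and eq: "rotate i v = rotate j v"
    show "i = j"
    proof (rule ccontr)
      assume "i \<noteq> j"
      then consider "i < j" | "j < i" by linarith
      then show False
      proof cases
        case 1
        have "rotate (n - i) (rotate i v) = v" using i qn rn by (simp add: rotate_rotate)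
        moreover have "rotate (n - i) (rotate j v) = rotate (j - i) v"
        proof -
          have eqn: "n - i + j = j - i + n" using i j qn 1 by simp
          have "rotate (n - i) (rotate j v) = rotate (j - i) (rotate n v)"
            by (simp only: rotate_rotate eqn)
          then show ?thesis using rn by simp
        qed
        ultimately have "rotate (j - i) v = v" using eq by simp
        moreover have "0 < j - i" "j - i < q" using 1 j by auto
        ultimately show False using not_less_Least[of "j - i" "\<lambda>p. 0 < p \<and> rotate p v = v"] unfolding q_def by blast
      next
        case 2
        have "rotate (n - j) (rotate j v) = v" using j qn rn by (simp add: rotate_rotate)
        moreover have "rotate (n - j) (rotate i v) = rotate (i - j) v"
        proof -
          have eqn: "n - j + i = i - j + n" using i j qn 2 by simp
          have "rotate (n - j) (rotate i v) = rotate (i - j) (rotate n v)"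
            by (simp only: rotate_rotate eqn)
          then show ?thesis using rn by simp
        qed
        ultimately have "rotate (i - j) v = v" using eq by simp
        moreover have "0 < i - j" "i - j < q" using 2 i by auto
        ultimately show False using not_less_Least[of "i - j" "\<lambda>p. 0 < p \<and> rotate p v = v"] unfolding q_def by blast
      qed
    qed
  qed
  have "(\<lambda>i. rotate i v) ` {..<q} \<subseteq> C" unfolding v(2) cyc_class_def by blast
  moreover have "finite C" using good_sub[OF assms(1)] assms(4) finite_subset by blast
  ultimately have "card ((\<lambda>i. rotate i v) ` {..<q}) \<le> card C" by (rule card_mono[rotated])
  then have "q \<le> card C" using card_image[OF inj] by simp
  then show ?thesis using q4 by simp
qed

lemma good_fin: "finite (Fc w n) \<Longrightarrow> finite (good w n)"
proof -
  assume f: "finite (Fc w n)"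
  have "good w n \<subseteq> Pow (Fc w n)" using good_sub by blast
  then show ?thesis using f finite_subset by blast
qed

lemma big_total: assumes "1 \<le> n" "finite (Fc w n)"
  shows "n * card {C \<in> good w n. \<not> small n C} \<le> 4 * card (Fc w n)"
proof -
  define Bg where "Bg = {C \<in> good w n. \<not> small n C}"
  have fB: "finite Bg" using good_fin[OF assms(2)] unfolding Bg_def by simp
  have fe: "finite C" if "C \<in> Bg" for C using that good_sub[of C w n] assms(2) finite_subset unfolding Bg_def by blast
  have pw: "pairwise disjnt Bg"
    unfolding pairwise_def disjnt_def
  proof (intro ballI impI)
    fix C D assume C: "C \<in> Bg" and D: "D \<in> Bg" and ne: "C \<noteq> D"
    show "C \<inter> D = {}"
    proof (rule ccontr)
      assume "C \<inter> D \<noteq> {}"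
      then obtain y where "y \<in> C" "y \<in> D" by blast
      then show False using good_elem(1)[of C w n y] good_elem(1)[of D w n y] C D ne unfolding Bg_def by simp
    qed
  qed
  have "n * card Bg = (\<Sum>C\<in>Bg. n)" by simp
  also have "\<dots> \<le> (\<Sum>C\<in>Bg. 4 * card C)"
  proof (rule sum_mono)
    fix C assume "C \<in> Bg"
    then show "n \<le> 4 * card C" using big_card[of C w n] assms unfolding Bg_def by simp
  qed
  also have "\<dots> = 4 * (\<Sum>C\<in>Bg. card C)" by (simp add: sum_distrib_left)
  also have "(\<Sum>C\<in>Bg. card C) = card (\<Union>Bg)" using card_Union_disjoint[OF pw fe] by simp
  also have "card (\<Union>Bg) \<le> card (Fc w n)"
    by (rule card_mono[OF assms(2)]) (use good_sub in \<open>auto simp: Bg_def\<close>)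
  finally show ?thesis unfolding Bg_def by simp
qed

lemma tele: "1 \<le> k \<Longrightarrow> (\<Sum>m\<in>{k..k+j}. f m - f (m - 1)) = f (k + j) - f (k - 1 :: nat)" for f :: "nat \<Rightarrow> int"
proof (induction j)
  case 0 then show ?case by simp
next
  case (Suc j)
  have "{k..k + Suc j} = insert (k + Suc j) {k..k+j}" by auto
  then have "(\<Sum>m\<in>{k..k + Suc j}. f m - f (m - 1)) = (f (k + Suc j) - f (k + j)) + (\<Sum>m\<in>{k..k+j}. f m - f (m - 1))"
    by simp
  then show ?case using Suc by simp
qed

lemma small_avg: assumes "1 \<le> n" "\<And>j. finite (Fc w j)"
  shows "int (n + 1 - (n+1) div 2) * int (card {C \<in> good w n. small n C})
          \<le> int (card (Fc w n)) + int (n + 1 - (n+1) div 2)"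
proof -
  define k where "k = (n+1) div 2"
  define sc where "sc = int (card {C \<in> good w n. small n C})"
  define f where "f m = int (card (Fc w m))" for m
  have k1: "1 \<le> k" "k \<le> n" "n \<le> 2 * k" using assms(1) unfolding k_def by auto
  have bd: "sc \<le> f m - f (m - 1) + 1" if "m \<in> {k..n}" for m
  proof -
    have m: "1 \<le> m" "m \<le> n" "n \<le> 2 * m" using that k1 by auto
    have "card {C \<in> good w n. small n C} \<le> card (Fc w m - Tr w m)"
      by (rule small_count[OF m assms(2)])
    then show ?thesis using count_int[OF m(1) assms(2) assms(2)] unfolding sc_def f_def by linarith
  qed
  have "(\<Sum>m\<in>{k..n}. sc) \<le> (\<Sum>m\<in>{k..n}. (f m - f (m - 1)) + 1)"
    by (rule sum_mono) (rule bd)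
  also have "\<dots> = (\<Sum>m\<in>{k..n}. f m - f (m - 1)) + int (card {k..n})"
    by (simp add: sum.distrib)
  also have "(\<Sum>m\<in>{k..n}. f m - f (m - 1)) = f n - f (k - 1)"
    using tele[OF k1(1), where j="n - k" and f=f] k1 by simp
  finally have "int (card {k..n}) * sc \<le> f n - f (k - 1) + int (card {k..n})" by simp
  moreover have "0 \<le> f (k - 1)" unfolding f_def by simp
  moreover have "card {k..n} = n + 1 - k" by simp
  ultimately show ?thesis unfolding k_def[symmetric] sc_def[symmetric] f_def by simp
qed

lemma lie0: "lie_complexity w 0 \<le> 1"
proof -
  have "good w 0 \<subseteq> {cyc_class []}" unfolding good_def by auto
  then have "card (good w 0) \<le> card {cyc_class ([]::'a list)}" by (rule card_mono[rotated]) simp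
  then show ?thesis using lie_good[of w 0] by simp
qed

lemma part2: assumes "\<And>j. finite (Fc w j)" "linear_factor_complexity w"
  shows "\<exists>K. \<forall>n. lie_complexity w n \<le> K"
proof -
  obtain A B :: real where AB: "\<And>n. real (factor_complexity w n) \<le> A * real n + B"
    using assms(2) unfolding linear_factor_complexity_def by blast
  define K where "K = nat \<lceil>1 + 6 * (\<bar>A\<bar> + \<bar>B\<bar>)\<rceil> + 1"
  have "lie_complexity w n \<le> K" for n
  proof (cases "n = 0")
    case True then show ?thesis using lie0[of w] unfolding K_def by simp
  next
    case False
    then have n1: "1 \<le> n" by simp
    define N where "N = n + 1 - (n+1) div 2"
    define sc where "sc = card {C \<in> good w n. small n C}"
    define bc where "bc = card {C \<in> good w n. \<not> small n C}"
    define P where "P = real (card (Fc w n))"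
    have LL: "lie_complexity w n = sc + bc"
    proof -
      have "good w n = {C \<in> good w n. small n C} \<union> {C \<in> good w n. \<not> small n C}" by auto
      moreover have "finite (good w n)" using good_fin assms(1) by blast
      ultimately have "card (good w n) = sc + bc" unfolding sc_def bc_def
        by (metis (no_types, lifting) card_Un_disjoint disjoint_iff finite_Un mem_Collect_eq)
      then show ?thesis using lie_good by metis
    qed
    have N1: "1 \<le> N" and N2: "real n \<le> 2 * real N" unfolding N_def using n1 by auto
    have s1: "real N * real sc \<le> P + real N"
      using small_avg[OF n1 assms(1)] unfolding N_def[symmetric] sc_def[symmetric] P_def
      by (metis of_int_le_iff of_int_of_nat_eq of_nat_add of_nat_mult of_int_add of_int_mult)
    have b1: "real n * real bc \<le> 4 * P"
      using big_total[OF n1 assms(1)] unfolding bc_def[symmetric] P_def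
      by (metis of_nat_le_iff of_nat_mult of_nat_numeral)
    have P0: "0 \<le> P" unfolding P_def by simp
    have PA: "P \<le> (\<bar>A\<bar> + \<bar>B\<bar>) * real n"
    proof -
      have "P \<le> A * real n + B" using AB[of n] unfolding P_def fc_Fc by simp
      also have "\<dots> \<le> \<bar>A\<bar> * real n + \<bar>B\<bar> * real n"
      proof -
        have "A * real n \<le> \<bar>A\<bar> * real n" by (rule mult_right_mono) auto
        moreover have "B \<le> \<bar>B\<bar> * real n"
        proof -
          have "\<bar>B\<bar> * 1 \<le> \<bar>B\<bar> * real n" by (rule mult_left_mono) (use n1 in auto)
          moreover have "B \<le> \<bar>B\<bar>" by (rule abs_ge_self)
          ultimately show ?thesis by linarith
        qed
        ultimately show ?thesis by simp
      qed
      finally show ?thesis by (simp add: algebra_simps)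
    qed
    define M where "M = \<bar>A\<bar> + \<bar>B\<bar>"
    have M0: "0 \<le> M" unfolding M_def by simp
    have nN: "real N * real sc \<le> M * real n + real N" using s1 PA unfolding M_def by simp
    also have "\<dots> \<le> (2 * M + 1) * real N" using N2 M0 by (simp add: algebra_simps) (metis mult_left_mono mult.commute mult.left_commute)
    finally have "real N * real sc \<le> real N * (2 * M + 1)" by (simp add: mult.commute)
    then have sb: "real sc \<le> 2 * M + 1" using N1 by simp
    have "real n * real bc \<le> real n * (4 * M)" using b1 PA unfolding M_def by (simp add: algebra_simps)
    then have bb: "real bc \<le> 4 * M" using n1 by simp
    have "real (lie_complexity w n) \<le> 1 + 6 * M" using sb bb LL by simp
    also have "\<dots> \<le> real K" unfolding K_def M_def by linarith
    finally show ?thesis by simp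
  qed
  then show ?thesis by blast
qed

theorem theorem1:
  fixes \<Sigma> :: "'a set" and w :: "nat \<Rightarrow> 'a"
  assumes "finite \<Sigma>" and "\<forall>i. w i \<in> \<Sigma>"
  shows "(\<forall>n\<ge>1. int (lie_complexity w n)
            \<le> int (factor_complexity w n) - int (factor_complexity w (n - 1)) + 1)
         \<and> (linear_factor_complexity w \<longrightarrow> (\<exists>K. \<forall>n. lie_complexity w n \<le> K))"
proof -
  have fin: "\<And>j. finite (Fc w j)" using finite_Fc[OF assms] by blast
  show ?thesis using part1[OF _ fin fin] part2[OF fin] by blast
qed

end
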